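(* Let $\mathbb{X}$ be a two-dimensional real Banach space, $x_1,x_2\in S_{\mathbb{X}}$ and $\epsilon_1,\epsilon_2\in(0,1)$. If $F(x_1,\epsilon_1)=F(x_2,\epsilon_2)$, then $x_1=\pm x_2$ and $\epsilon_1=\epsilon_2$.
   Context: $S_{\mathbb{X}}$ is the unit sphere. For $x,y\in\mathbb{X}$ and $\epsilon\in[0,1)$, $x\perp_D^{\epsilon} y$ means $\|x+\lambda y\|\geq\sqrt{1-\epsilon^2}\,\|x\|$ for all $\lambda\in\mathbb{R}$; $F(x,\epsilon)=\{y\in\mathbb{X}: x\perp_D^{\epsilon}y\}$. *)

theory Defs
  imports "HOL-Analysis.Analysis"
begin

definition approx_bj_orth :: "'a::real_normed_vector \<Rightarrow> real \<Rightarrow> 'a \<Rightarrow> bool" where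
  "approx_bj_orth x \<epsilon> y \<longleftrightarrow> (\<forall>t::real. norm (x + t *\<^sub>R y) \<ge> sqrt (1 - \<epsilon>^2) * norm x)"

definition F_set :: "'a::real_normed_vector \<Rightarrow> real \<Rightarrow> 'a set" where
  "F_set x \<epsilon> = {y. approx_bj_orth x \<epsilon> y}"

end

theory Submission
  imports Defs
begin


definition indep2 :: "'a::real_vector \<Rightarrow> 'a \<Rightarrow> bool" where
  "indep2 a b \<longleftrightarrow> (\<forall>c d. c *\<^sub>R a + d *\<^sub>R b = 0 \<longrightarrow> c = 0 \<and> d = 0)"

lemma exists_indep2:
  fixes u :: "'a::real_vector"
  assumes "dim (UNIV :: 'a set) = 2" "u \<noteq> 0"
  shows "\<exists>v. indep2 u v"
proof -
  have "span {u} \<noteq> UNIV"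
  proof
    assume "span {u} = UNIV"
    then have "dim (UNIV::'a set) \<le> card {u}" by (intro dim_le_card) auto
    then show False using assms(1) by simp
  qed
  then obtain v where v: "v \<notin> span {u}" by blast
  show ?thesis
  proof (intro exI, unfold indep2_def, intro allI impI)
    fix c d assume h: "c *\<^sub>R u + d *\<^sub>R v = 0"
    show "c = 0 \<and> d = 0"
    proof (cases "d = 0")
      case True then show ?thesis using h assms(2) by simp
    next
      case False
      have "(1/d) *\<^sub>R (c *\<^sub>R u + d *\<^sub>R v) = 0" using h by simp
      then have "(c/d) *\<^sub>R u + v = 0" using False by (simp add: scaleR_add_right)
      then have "v = (- c / d) *\<^sub>R u" by (simp add: eq_neg_iff_add_eq_0 add.commute)
      then have "v \<in> span {u}" by (metis span_base span_scale singletonI)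
      then show ?thesis using v by simp
    qed
  qed
qed

lemma indep2_span:
  fixes a :: "'a::real_vector"
  assumes "dim (UNIV :: 'a set) = 2" "indep2 a b"
  shows "\<exists>c d. z = c *\<^sub>R a + d *\<^sub>R b"
proof -
  have ab: "a \<noteq> b" "a \<noteq> 0" "b \<noteq> 0"
  proof -
    have i: "\<And>c d. c *\<^sub>R a + d *\<^sub>R b = 0 \<Longrightarrow> c = 0" using assms(2) unfolding indep2_def by blast
    have i2: "\<And>c d. c *\<^sub>R a + d *\<^sub>R b = 0 \<Longrightarrow> d = 0" using assms(2) unfolding indep2_def by blast
    show "a \<noteq> b" using i[of 1 "-1"] by auto
    show "a \<noteq> 0" using i[of 1 0] by auto
    show "b \<noteq> 0" using i2[of 0 1] by auto
  qed
  have ind: "independent {a, b}"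
  proof -
    have "a \<notin> span {b}"
    proof
      assume "a \<in> span {b}" then obtain k where "a = k *\<^sub>R b" by (auto simp: span_singleton)
      then have "1 *\<^sub>R a + (-k) *\<^sub>R b = 0" by simp
      then show False using assms(2) unfolding indep2_def by fastforce
    qed
    then show ?thesis using ab by (simp add: independent_insert)
  qed
  obtain B :: "'a set" where B: "independent B" "UNIV \<subseteq> span B" "card B = 2"
    using basis_exists[of "UNIV :: 'a set"] assms(1) by auto
  have fB: "finite B" using B(3) by (simp add: card_ge_0_finite)
  have "z \<in> span {a, b}"
  proof (rule ccontr)
    assume z: "z \<notin> span {a, b}"
    then have z2: "z \<notin> {a, b}" by (auto intro: span_base)
    have "independent (insert z {a, b})" using z ind by (rule independent_insertI)
    then have "card (insert z {a, b}) \<le> card B"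
      using independent_span_bound[OF fB, of "insert z {a,b}"] B(2) by auto
    then show False using z2 ab B(3) by auto
  qed
  then obtain k where "z - k *\<^sub>R a \<in> span {b}" by (auto simp: span_breakdown_eq)
  then obtain m where "z - k *\<^sub>R a = m *\<^sub>R b" by (auto simp: span_singleton)
  then show ?thesis by (metis diff_eq_eq add.commute)
qed

definition Mset :: "'a::real_normed_vector \<Rightarrow> 'a set" where
  "Mset u = {y. \<forall>t. 1 \<le> norm (u + t *\<^sub>R y)}"

lemma M_self: "u \<notin> Mset u"
proof
  assume "u \<in> Mset u"
  then have "1 \<le> norm (u + (-1) *\<^sub>R u)" unfolding Mset_def by blast
  then show False by simp
qed

lemma M_neg: "y \<in> Mset u \<Longrightarrow> - y \<in> Mset u"
proof -
  assume h: "y \<in> Mset u"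
  have "1 \<le> norm (u + t *\<^sub>R (- y))" for t
    using h unfolding Mset_def by (metis (no_types) mem_Collect_eq scaleR_minus_left scaleR_minus_right)
  then show ?thesis unfolding Mset_def by blast
qed

lemma M_scale:
  assumes "y \<in> Mset u" "c \<noteq> 0"
  shows "\<bar>c\<bar> \<le> norm (c *\<^sub>R u + w *\<^sub>R y)"
proof -
  have "c *\<^sub>R u + w *\<^sub>R y = c *\<^sub>R (u + (w / c) *\<^sub>R y)"
    using assms(2) by (simp add: scaleR_add_right)
  then have "norm (c *\<^sub>R u + w *\<^sub>R y) = \<bar>c\<bar> * norm (u + (w / c) *\<^sub>R y)" by simp
  moreover have "1 \<le> norm (u + (w / c) *\<^sub>R y)" using assms(1) unfolding Mset_def by blast
  ultimately show ?thesis
    by (metis abs_ge_zero mult.right_neutral mult_left_mono)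
qed

lemma indep_of_M:
  assumes "y \<in> Mset u" "y \<noteq> 0"
  shows "indep2 u y"
  unfolding indep2_def
proof (intro allI impI)
  fix c d assume h: "c *\<^sub>R u + d *\<^sub>R y = 0"
  have "c = 0"
  proof (rule ccontr)
    assume "c \<noteq> 0"
    then have "\<bar>c\<bar> \<le> norm (c *\<^sub>R u + d *\<^sub>R y)" using M_scale[OF assms(1)] by blast
    then show False using h \<open>c \<noteq> 0\<close> by simp
  qed
  then show "c = 0 \<and> d = 0" using h assms(2) by simp
qed

lemma M_open_compl:
  assumes "y \<notin> Mset u"
  shows "\<exists>e>0. \<forall>y'. norm (y' - y) < e \<longrightarrow> y' \<notin> Mset u"
proof -
  obtain t where t: "norm (u + t *\<^sub>R y) < 1" using assms unfolding Mset_def by (auto simp: not_le)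
  define e where "e = (1 - norm (u + t *\<^sub>R y)) / (\<bar>t\<bar> + 1)"
  have e: "e > 0" using t unfolding e_def by (simp add: divide_pos_pos add_pos_nonneg)
  have "y' \<notin> Mset u" if "norm (y' - y) < e" for y'
  proof -
    have "u + t *\<^sub>R y' = (u + t *\<^sub>R y) + t *\<^sub>R (y' - y)" by (simp add: algebra_simps)
    then have "norm (u + t *\<^sub>R y') \<le> norm (u + t *\<^sub>R y) + \<bar>t\<bar> * norm (y' - y)"
      by (metis norm_scaleR norm_triangle_ineq real_norm_def)
    also have "\<bar>t\<bar> * norm (y' - y) \<le> \<bar>t\<bar> * e" using that by (simp add: mult_left_mono)
    also have "\<bar>t\<bar> * e < (\<bar>t\<bar> + 1) * e" using e by simp
    also have "(\<bar>t\<bar> + 1) * e = 1 - norm (u + t *\<^sub>R y)" unfolding e_def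
      by (simp add: add_pos_nonneg)
    finally have "norm (u + t *\<^sub>R y') < 1" by simp
    then show ?thesis unfolding Mset_def by (auto simp: not_le)
  qed
  then show ?thesis using e by blast
qed


lemma M_interior:
  assumes "y \<noteq> 0" "\<forall>t. 1 < norm (u + t *\<^sub>R y)"
  shows "\<exists>e>0. \<forall>y'. norm (y' - y) < e \<longrightarrow> y' \<in> Mset u"
proof -
  define n where "n = norm y"
  have n: "n > 0" using assms(1) unfolding n_def by simp
  define R where "R = 2 * (norm u + 2) / n"
  have R: "R > 0" unfolding R_def using n by (simp add: add_nonneg_pos)
  have "\<exists>x\<in>{-R..R}. \<forall>z\<in>{-R..R}. norm (u + x *\<^sub>R y) \<le> norm (u + z *\<^sub>R y)"
    by (rule continuous_attains_inf) (use R in \<open>auto intro!: continuous_intros\<close>)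
  then obtain t0 where t0: "\<forall>z\<in>{-R..R}. norm (u + t0 *\<^sub>R y) \<le> norm (u + z *\<^sub>R y)" by blast
  define m where "m = norm (u + t0 *\<^sub>R y)"
  have m: "m > 1" unfolding m_def using assms(2) by blast
  define e where "e = min (n/2) ((m - 1) / (R + 1))"
  have e: "e > 0" unfolding e_def using n m R by simp
  have "y' \<in> Mset u" if y': "norm (y' - y) < e" for y'
  proof -
    have "1 \<le> norm (u + t *\<^sub>R y')" for t
    proof (cases "\<bar>t\<bar> \<le> R")
      case True
      have "u + t *\<^sub>R y = (u + t *\<^sub>R y') - t *\<^sub>R (y' - y)" by (simp add: algebra_simps)
      then have "norm (u + t *\<^sub>R y) \<le> norm (u + t *\<^sub>R y') + \<bar>t\<bar> * norm (y' - y)"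
        by (metis norm_scaleR norm_triangle_ineq4 real_norm_def)
      moreover have "m \<le> norm (u + t *\<^sub>R y)" unfolding m_def using t0 True by (simp add: abs_le_iff)
      moreover have "\<bar>t\<bar> * norm (y' - y) \<le> R * e"
        using True y' e by (intro mult_mono) auto
      moreover have "R * e \<le> (R + 1) * e" using e by simp
      moreover have "(R + 1) * e \<le> m - 1"
      proof -
        have "e \<le> (m - 1) / (R + 1)" unfolding e_def by simp
        then have "(R + 1) * e \<le> (R + 1) * ((m - 1) / (R + 1))" using R by (intro mult_left_mono) auto
        also have "\<dots> = m - 1" using R by simp
        finally show ?thesis .
      qed
      ultimately show ?thesis by linarith
    next
      case False
      have ny: "norm y' \<ge> n / 2"
        using norm_triangle_ineq2[of y y'] y' unfolding e_def n_def by (simp add: norm_minus_commute)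
      have "norm (t *\<^sub>R y') \<le> norm (u + t *\<^sub>R y') + norm u"
        by (metis add.commute add_diff_cancel_left' norm_triangle_ineq4)
      moreover have "\<bar>t\<bar> * norm y' \<ge> R * (n / 2)"
        using False ny n R by (intro mult_mono) auto
      moreover have "R * (n / 2) = norm u + 2" unfolding R_def using n by simp
      ultimately show ?thesis by simp
    qed
    then show ?thesis unfolding Mset_def by blast
  qed
  then show ?thesis using e by blast
qed


lemma path_diff: fixes a b :: "'a::real_vector" shows "((1 - s) *\<^sub>R a + s *\<^sub>R b) - ((1 - s') *\<^sub>R a + s' *\<^sub>R b) = (s - s') *\<^sub>R (b - a)"
  by (simp add: scaleR_diff_left scaleR_diff_right algebra_simps)

lemma M_boundary:
  assumes "a \<notin> Mset u" "b \<in> Mset u"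
  shows "\<exists>s. 0 < s \<and> s \<le> 1 \<and> (1 - s) *\<^sub>R a + s *\<^sub>R b \<in> Mset u \<and>
     (\<forall>s'. 0 \<le> s' \<and> s' < s \<longrightarrow> (1 - s') *\<^sub>R a + s' *\<^sub>R b \<notin> Mset u)"
proof -
  define p where "p s = (1 - s) *\<^sub>R a + s *\<^sub>R b" for s
  define S where "S = {s. 0 \<le> s \<and> s \<le> 1 \<and> p s \<in> Mset u}"
  define s0 where "s0 = Inf S"
  have S1: "1 \<in> S" unfolding S_def p_def using assms by simp
  have bdd: "bdd_below S" unfolding S_def by (rule bdd_belowI[of _ 0]) auto
  have s0le: "s0 \<le> 1" unfolding s0_def by (rule cInf_lower[OF S1 bdd])
  have s0ge: "0 \<le> s0" unfolding s0_def using S1 by (intro cInf_greatest) (auto simp: S_def)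
  have ps0: "p s0 \<in> Mset u"
  proof (rule ccontr)
    assume "p s0 \<notin> Mset u"
    then obtain e where e: "e > 0" "\<forall>y'. norm (y' - p s0) < e \<longrightarrow> y' \<notin> Mset u"
      using M_open_compl by blast
    define d where "d = e / (norm (b - a) + 1)"
    have d: "d > 0" unfolding d_def using e by (simp add: add_nonneg_pos)
    have "Inf S < s0 + d" using d unfolding s0_def by simp
    then obtain s where s: "s \<in> S" "s < s0 + d" using cInf_less_iff[of S "s0 + d"] S1 bdd by blast
    have "s0 \<le> s" unfolding s0_def by (rule cInf_lower[OF s(1) bdd])
    have "norm (p s - p s0) = (s - s0) * norm (b - a)"
      unfolding p_def path_diff using \<open>s0 \<le> s\<close> by simp
    also have "\<dots> \<le> d * norm (b - a)" using s(2) \<open>s0 \<le> s\<close> by (intro mult_right_mono) auto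
    also have "\<dots> < d * (norm (b - a) + 1)" using d by simp
    also have "\<dots> = e" unfolding d_def
    proof -
      have "norm (b - a) + 1 > 0" by (simp add: add_nonneg_pos)
      then show "e / (norm (b - a) + 1) * (norm (b - a) + 1) = e" by simp
    qed
    finally have "p s \<notin> Mset u" using e by blast
    then show False using s(1) unfolding S_def by blast
  qed
  have s0pos: "0 < s0"
  proof (rule ccontr)
    assume "\<not> 0 < s0"
    then have "s0 = 0" using s0ge by simp
    then show False using ps0 assms(1) unfolding p_def by simp
  qed
  have "\<forall>s'. 0 \<le> s' \<and> s' < s0 \<longrightarrow> p s' \<notin> Mset u"
  proof (intro allI impI)
    fix s' assume h: "0 \<le> s' \<and> s' < s0"
    show "p s' \<notin> Mset u"
    proof
      assume "p s' \<in> Mset u"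
      then have "s' \<in> S" unfolding S_def using h s0le by simp
      then have "s0 \<le> s'" unfolding s0_def by (rule cInf_lower[OF _ bdd])
      then show False using h by simp
    qed
  qed
  then show ?thesis using s0pos s0le ps0 unfolding p_def by blast
qed

lemma M_touch:
  assumes "0 < s" "(1 - s) *\<^sub>R a + s *\<^sub>R b \<noteq> 0"
    and "\<forall>s'. 0 \<le> s' \<and> s' < s \<longrightarrow> (1 - s') *\<^sub>R a + s' *\<^sub>R b \<notin> Mset u"
  shows "\<exists>t. norm (u + t *\<^sub>R ((1 - s) *\<^sub>R a + s *\<^sub>R b)) \<le> 1"
proof (rule ccontr)
  define p where "p s = (1 - s) *\<^sub>R a + s *\<^sub>R b" for s
  assume "\<not> ?thesis"
  then have "\<forall>t. 1 < norm (u + t *\<^sub>R p s)" unfolding p_def by (auto simp: not_le)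
  then obtain e where e: "e > 0" "\<forall>y'. norm (y' - p s) < e \<longrightarrow> y' \<in> Mset u"
    using M_interior[of "p s" u] assms(2) unfolding p_def by blast
  define d where "d = min s (e / (norm (b - a) + 1)) / 2"
  have pe: "e / (norm (b - a) + 1) > 0" using e by (simp add: add_nonneg_pos)
  define q where "q = e / (norm (b - a) + 1)"
  have d: "d > 0" "d < s" "d \<le> q"
    unfolding d_def using pe assms(1) unfolding q_def[symmetric] by (auto simp: min_def)
  have "norm (p (s - d) - p s) = d * norm (b - a)"
    unfolding p_def path_diff using d by simp
  also have "\<dots> \<le> e / (norm (b - a) + 1) * norm (b - a)" using d unfolding q_def by (intro mult_right_mono) auto
  also have "\<dots> < e"
  proof -
    have nz: "norm (b - a) + 1 > 0" by (simp add: add_nonneg_pos)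
    have "e * norm (b - a) < e * (norm (b - a) + 1)" using e by simp
    then have "e * norm (b - a) / (norm (b - a) + 1) < e" using nz by (simp add: divide_less_eq)
    then show ?thesis by simp
  qed
  finally have "p (s - d) \<in> Mset u" using e by blast
  moreover have "0 \<le> s - d \<and> s - d < s" using d by simp
  ultimately show False using assms(3) unfolding p_def by blast
qed


lemma M_parallel:
  assumes "y \<in> Mset u1" "y \<in> Mset u2"
    and "norm (u1 + t1 *\<^sub>R y) \<le> 1" "norm (u2 + t2 *\<^sub>R y) \<le> 1"
    and "u2 = \<alpha> *\<^sub>R u1 + \<beta> *\<^sub>R y"
  shows "\<alpha> = 1 \<or> \<alpha> = -1"
proof -
  have a0: "\<alpha> \<noteq> 0"
  proof
    assume "\<alpha> = 0"
    then have "u2 + (- \<beta>) *\<^sub>R y = 0" using assms(5) by simp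
    moreover have "1 \<le> norm (u2 + (- \<beta>) *\<^sub>R y)" using assms(2) unfolding Mset_def by blast
    ultimately show False by simp
  qed
  have "\<bar>\<alpha>\<bar> \<le> norm (\<alpha> *\<^sub>R u1 + (\<beta> + t2) *\<^sub>R y)" by (rule M_scale[OF assms(1) a0])
  also have "\<alpha> *\<^sub>R u1 + (\<beta> + t2) *\<^sub>R y = u2 + t2 *\<^sub>R y" using assms(5) by (simp add: algebra_simps)
  finally have A1: "\<bar>\<alpha>\<bar> \<le> 1" using assms(4) by simp
  have ia: "inverse \<alpha> \<noteq> 0" using a0 by simp
  have "\<bar>inverse \<alpha>\<bar> \<le> norm (inverse \<alpha> *\<^sub>R u2 + (t1 - \<beta> / \<alpha>) *\<^sub>R y)" by (rule M_scale[OF assms(2) ia])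
  also have "inverse \<alpha> *\<^sub>R u2 + (t1 - \<beta> / \<alpha>) *\<^sub>R y = u1 + t1 *\<^sub>R y"
    using assms(5) a0 by (simp add: algebra_simps divide_inverse)
  finally have A2: "\<bar>inverse \<alpha>\<bar> \<le> 1" using assms(3) by simp
  have "1 \<le> \<bar>\<alpha>\<bar>"
  proof (rule ccontr)
    assume "\<not> 1 \<le> \<bar>\<alpha>\<bar>"
    then have "\<bar>\<alpha>\<bar> < 1" by simp
    then have "1 < inverse \<bar>\<alpha>\<bar>" using a0 by (simp add: one_less_inverse)
    then show False using A2 by (simp add: abs_inverse)
  qed
  then have "\<bar>\<alpha>\<bar> = 1" using A1 by simp
  then show ?thesis by (cases "0 \<le> \<alpha>") auto
qed

lemma M_mixed:
  assumes "y \<in> Mset u1" "y' \<in> Mset u1"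
    and "u2 = u1 + a *\<^sub>R y" "u2 = - u1 + b *\<^sub>R y'"
  shows "u1 \<in> Mset u2"
  unfolding Mset_def
proof (intro CollectI allI)
  fix t
  show "1 \<le> norm (u2 + t *\<^sub>R u1)"
  proof (cases "t \<ge> 0")
    case True
    have "u2 + t *\<^sub>R u1 = (1 + t) *\<^sub>R u1 + a *\<^sub>R y" using assms(3) by (simp add: algebra_simps)
    moreover have "\<bar>1 + t\<bar> \<le> norm ((1 + t) *\<^sub>R u1 + a *\<^sub>R y)" using True by (intro M_scale[OF assms(1)]) auto
    ultimately show ?thesis using True by simp
  next
    case False
    have "u2 + t *\<^sub>R u1 = (t - 1) *\<^sub>R u1 + b *\<^sub>R y'" using assms(4) by (simp add: algebra_simps)
    moreover have "\<bar>t - 1\<bar> \<le> norm ((t - 1) *\<^sub>R u1 + b *\<^sub>R y')" using False by (intro M_scale[OF assms(2)]) auto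
    ultimately show ?thesis using False by simp
  qed
qed

lemma strict_dir:
  fixes u :: "'a::real_normed_vector"
  assumes "norm u > 1" "indep2 u v"
  shows "\<exists>y. y \<noteq> 0 \<and> (\<forall>t. 1 < norm (u + t *\<^sub>R y))"
proof -
  define T where "T p = fst p *\<^sub>R u + snd p *\<^sub>R v" for p :: "real \<times> real"
  define S where "S = {p. norm (T p) \<le> 1}"
  have cvx: "convex S"
    unfolding convex_def S_def
  proof (intro allI impI ballI, clarify)
    fix x y :: "real \<times> real" and a b :: real
    assume h: "norm (T x) \<le> 1" "norm (T y) \<le> 1" "0 \<le> a" "0 \<le> b" "a + b = 1"
    have "T (a *\<^sub>R x + b *\<^sub>R y) = a *\<^sub>R T x + b *\<^sub>R T y" unfolding T_def by (simp add: algebra_simps)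
    then have "norm (T (a *\<^sub>R x + b *\<^sub>R y)) \<le> a * norm (T x) + b * norm (T y)"
      using h by (metis abs_of_nonneg norm_scaleR norm_triangle_ineq)
    also have "\<dots> \<le> a * 1 + b * 1" using h by (intro add_mono mult_left_mono) auto
    finally show "norm (T (a *\<^sub>R x + b *\<^sub>R y)) \<le> 1" using h by simp
  qed
  have cl: "closed S" unfolding S_def T_def
    by (intro closed_Collect_le continuous_intros)
  have z: "(1, 0) \<notin> S" unfolding S_def T_def using assms(1) by simp
  obtain a b where ab: "inner a (1, 0) < b" "\<forall>x\<in>S. b < inner a x"
    using separating_hyperplane_closed_point[OF cvx cl z] by blast
  have "0 \<in> S" unfolding S_def T_def by simp
  then have "b < 0" using ab(2) by auto
  then have a0: "a \<noteq> 0" using ab(1) by auto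
  define y where "y = T (- snd a, fst a)"
  have "y \<noteq> 0"
  proof
    assume "y = 0"
    then have "(- snd a) *\<^sub>R u + fst a *\<^sub>R v = 0" unfolding y_def T_def by simp
    then have "snd a = 0" "fst a = 0" using assms(2) unfolding indep2_def by fastforce+
    then show False using a0 by (simp add: prod_eq_iff)
  qed
  moreover have "1 < norm (u + t *\<^sub>R y)" for t
  proof -
    define q where "q = (1 - t * snd a, t * fst a)"
    have "inner a q = inner a (1, 0)"
      unfolding q_def by (cases a) (simp add: inner_prod_def algebra_simps)
    then have "q \<notin> S" using ab by auto
    moreover have "T q = u + t *\<^sub>R y" unfolding q_def y_def T_def by (simp add: algebra_simps)
    ultimately show ?thesis unfolding S_def by auto
  qed
  ultimately show ?thesis by blast
qed


lemma main2d:
  fixes u1 u2 :: "'a::real_normed_vector"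
  assumes dim: "dim (UNIV::'a set) = 2" and n1: "norm u1 > 1" and eq: "Mset u1 = Mset u2"
  shows "u2 = u1 \<or> u2 = - u1"
proof -
  have "u1 \<noteq> 0" using n1 by auto
  then obtain v where "indep2 u1 v" using exists_indep2[OF dim] by blast
  then obtain y1 where y1: "y1 \<noteq> 0" "\<forall>t. 1 < norm (u1 + t *\<^sub>R y1)" using strict_dir[OF n1] by blast
  have y1M: "y1 \<in> Mset u1" unfolding Mset_def using y1(2) less_imp_le by blast
  have ind1: "indep2 u1 y1" by (rule indep_of_M[OF y1M y1(1)])
  have key: "\<exists>y s \<alpha> \<beta>. 0 < s \<and> s < 1 \<and> y = (1 - s) *\<^sub>R u1 + s *\<^sub>R b \<and> y \<in> Mset u1 \<and>
      u2 = \<alpha> *\<^sub>R u1 + \<beta> *\<^sub>R y \<and> (\<alpha> = 1 \<or> \<alpha> = -1)"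
    if b: "b = y1 \<or> b = - y1" for b
  proof -
    have bstrict: "\<forall>t. 1 < norm (u1 + t *\<^sub>R b)"
      using b y1(2) by (metis scaleR_minus_left scaleR_minus_right)
    have bM: "b \<in> Mset u1" unfolding Mset_def using bstrict less_imp_le by blast
    have b0: "b \<noteq> 0" using b y1(1) by auto
    have indb: "indep2 u1 b" by (rule indep_of_M[OF bM b0])
    obtain s where s: "0 < s" "s \<le> 1" "(1 - s) *\<^sub>R u1 + s *\<^sub>R b \<in> Mset u1"
      "\<forall>s'. 0 \<le> s' \<and> s' < s \<longrightarrow> (1 - s') *\<^sub>R u1 + s' *\<^sub>R b \<notin> Mset u1"
      using M_boundary[OF M_self bM] by blast
    define y where "y = (1 - s) *\<^sub>R u1 + s *\<^sub>R b"
    have y0: "y \<noteq> 0"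
    proof
      assume "y = 0"
      then have "s = 0" using indb unfolding indep2_def y_def by blast
      then show False using s(1) by simp
    qed
    obtain t1 where t1: "norm (u1 + t1 *\<^sub>R y) \<le> 1"
      using M_touch[OF s(1) _ s(4)] y0 unfolding y_def by blast
    have s1: "s < 1"
    proof (rule ccontr)
      assume "\<not> s < 1"
      then have "s = 1" using s(2) by simp
      then have "y = b" unfolding y_def by simp
      then show False using t1 bstrict by (metis not_le)
    qed
    have s4': "\<forall>s'. 0 \<le> s' \<and> s' < s \<longrightarrow> (1 - s') *\<^sub>R u1 + s' *\<^sub>R b \<notin> Mset u2"
      using s(4) eq by simp
    obtain t2 where t2: "norm (u2 + t2 *\<^sub>R y) \<le> 1"
      using M_touch[OF s(1) _ s4'] y0 unfolding y_def by blast
    have yM: "y \<in> Mset u1" using s(3) unfolding y_def .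
    have indy: "indep2 u1 y" by (rule indep_of_M[OF yM y0])
    obtain \<alpha> \<beta> where ab: "u2 = \<alpha> *\<^sub>R u1 + \<beta> *\<^sub>R y" using indep2_span[OF dim indy] by blast
    have "\<alpha> = 1 \<or> \<alpha> = -1"
      by (rule M_parallel[OF yM _ t1 t2 ab]) (use yM eq in simp)
    then show ?thesis using s(1) s1 yM ab unfolding y_def by blast
  qed
  obtain y s \<alpha> \<beta> where A: "0 < s" "s < 1" "y = (1 - s) *\<^sub>R u1 + s *\<^sub>R y1" "y \<in> Mset u1"
      "u2 = \<alpha> *\<^sub>R u1 + \<beta> *\<^sub>R y" "\<alpha> = 1 \<or> \<alpha> = -1"
    using key[of y1] by blast
  obtain y' s' \<alpha>' \<beta>' where B: "0 < s'" "s' < 1" "y' = (1 - s') *\<^sub>R u1 + s' *\<^sub>R (- y1)" "y' \<in> Mset u1"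
      "u2 = \<alpha>' *\<^sub>R u1 + \<beta>' *\<^sub>R y'" "\<alpha>' = 1 \<or> \<alpha>' = -1"
    using key[of "- y1"] by blast
  have indyy: "indep2 y y'"
    unfolding indep2_def
  proof (intro allI impI)
    fix c d assume h: "c *\<^sub>R y + d *\<^sub>R y' = 0"
    have "(c * (1 - s) + d * (1 - s')) *\<^sub>R u1 + (c * s - d * s') *\<^sub>R y1 = c *\<^sub>R y + d *\<^sub>R y'"
      unfolding A(3) B(3) by (simp add: algebra_simps)
    then have "(c * (1 - s) + d * (1 - s')) *\<^sub>R u1 + (c * s - d * s') *\<^sub>R y1 = 0" using h by simp
    then have E: "c * (1 - s) + d * (1 - s') = 0 \<and> c * s - d * s' = 0"
      using ind1 unfolding indep2_def by blast
    then have E: "c * (1 - s) + d * (1 - s') = 0" "c * s - d * s' = 0" by auto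
    have "s * (c * (1 - s) + d * (1 - s')) - (1 - s) * (c * s - d * s') = d * (s * (1 - s') + s' * (1 - s))"
      by (simp add: algebra_simps)
    then have "d * (s * (1 - s') + s' * (1 - s)) = 0" using E by simp
    moreover have "s * (1 - s') + s' * (1 - s) > 0"
      using A(1,2) B(1,2) by (intro add_pos_nonneg) auto
    ultimately have "d = 0" by simp
    then show "c = 0 \<and> d = 0" using E(2) A(1) by simp
  qed
  show ?thesis
  proof (cases "\<alpha> = \<alpha>'")
    case True
    then have "\<beta> *\<^sub>R y + (- \<beta>') *\<^sub>R y' = 0" using A(5) B(5) by (simp add: algebra_simps)
    then have "\<beta> = 0" using indyy unfolding indep2_def by blast
    then show ?thesis using A(5,6) by auto
  next
    case False
    have "u1 \<in> Mset u2"
    proof (cases "\<alpha> = 1")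
      case True
      then have "\<alpha>' = -1" using False B(6) by auto
      then show ?thesis using M_mixed[OF A(4) B(4), of u2 \<beta> \<beta>'] A(5) B(5) True by simp
    next
      case F2: False
      then have "\<alpha> = -1" "\<alpha>' = 1" using False A(6) B(6) by auto
      then show ?thesis using M_mixed[OF B(4) A(4), of u2 \<beta>' \<beta>] A(5) B(5) by simp
    qed
    then show ?thesis using M_self[of u1] eq by simp
  qed
qed


lemma F_eq_M:
  fixes x :: "'a::real_normed_vector"
  assumes "norm x = 1" "0 < d" "d = sqrt (1 - e^2)"
  shows "F_set x e = Mset ((1 / d) *\<^sub>R x)"
proof -
  have id: "(1 / d) *\<^sub>R x + t *\<^sub>R y = (1 / d) *\<^sub>R (x + (d * t) *\<^sub>R y)" for t and y :: 'a
    using assms(2) by (simp add: scaleR_add_right)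
  have nrm: "norm ((1 / d) *\<^sub>R x + t *\<^sub>R y) = norm (x + (d * t) *\<^sub>R y) / d" for t y
    unfolding id using assms(2) by simp
  have "(\<forall>t. d \<le> norm (x + t *\<^sub>R y)) \<longleftrightarrow> (\<forall>t. 1 \<le> norm ((1 / d) *\<^sub>R x + t *\<^sub>R y))" for y
  proof
    assume h: "\<forall>t. d \<le> norm (x + t *\<^sub>R y)"
    show "\<forall>t. 1 \<le> norm ((1 / d) *\<^sub>R x + t *\<^sub>R y)"
      using h assms(2) unfolding nrm by (simp add: le_divide_eq)
  next
    assume h: "\<forall>t. 1 \<le> norm ((1 / d) *\<^sub>R x + t *\<^sub>R y)"
    show "\<forall>t. d \<le> norm (x + t *\<^sub>R y)"
    proof
      fix t
      have "1 \<le> norm (x + (d * (t / d)) *\<^sub>R y) / d" using h unfolding nrm by blast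
      then show "d \<le> norm (x + t *\<^sub>R y)" using assms(2) by (simp add: le_divide_eq)
    qed
  qed
  moreover have sq: "sqrt (1 - e^2) * norm x = d" using assms(1,3) by simp
  ultimately show ?thesis
    unfolding F_set_def Mset_def approx_bj_orth_def sq by blast
qed

theorem theorem2p5:
  fixes x1 x2 :: "'a::banach" and e1 e2 :: real
  assumes "dim (UNIV :: 'a set) = 2"
    and "norm x1 = 1" and "norm x2 = 1"
    and "0 < e1" and "e1 < 1" and "0 < e2" and "e2 < 1"
    and "F_set x1 e1 = F_set x2 e2"
  shows "(x1 = x2 \<or> x1 = - x2) \<and> e1 = e2"
proof -
  define d1 where "d1 = sqrt (1 - e1^2)"
  define d2 where "d2 = sqrt (1 - e2^2)"
  have e1sq: "0 < e1^2" "e1^2 < 1" using assms(4,5) by (auto simp: power_less_one_iff)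
  have e2sq: "0 < e2^2" "e2^2 < 1" using assms(6,7) by (auto simp: power_less_one_iff)
  have d1: "0 < d1" "d1 < 1" unfolding d1_def using e1sq by auto
  have d2: "0 < d2" "d2 < 1" unfolding d2_def using e2sq by auto
  define u1 where "u1 = (1 / d1) *\<^sub>R x1"
  define u2 where "u2 = (1 / d2) *\<^sub>R x2"
  have nu1: "norm u1 = 1 / d1" unfolding u1_def using assms(2) d1 by simp
  have nu2: "norm u2 = 1 / d2" unfolding u2_def using assms(3) d2 by simp
  have gt1: "norm u1 > 1" unfolding nu1 using d1 by simp
  have m1: "F_set x1 e1 = Mset u1" unfolding u1_def by (rule F_eq_M[OF assms(2) d1(1) d1_def])
  have m2: "F_set x2 e2 = Mset u2" unfolding u2_def by (rule F_eq_M[OF assms(3) d2(1) d2_def])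
  have "Mset u1 = Mset u2" using assms(8) m1 m2 by simp
  then have uu: "u2 = u1 \<or> u2 = - u1" using main2d[OF assms(1) gt1] by blast
  then have "norm u2 = norm u1" by auto
  then have "1 / d2 = 1 / d1" using nu1 nu2 by simp
  then have dd: "d1 = d2" using d1 d2 by simp
  have x1: "x1 = d1 *\<^sub>R u1" unfolding u1_def using d1 by simp
  have x2: "x2 = d1 *\<^sub>R u2" unfolding u2_def dd using d2 by simp
  have xx: "x1 = x2 \<or> x1 = - x2" using uu x1 x2 by auto
  have "1 - e1^2 = 1 - e2^2" using dd unfolding d1_def d2_def by simp
  then have "e1^2 = e2^2" by simp
  then have "e1 = e2" using assms(4,6) by (simp add: power2_eq_iff_nonneg)
  then show ?thesis using xx by simp
qed

end
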